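(* Let $K_0$ and $K_1$ be fully exposed almost monotone $k$-singular long knots with the same underlying chord diagram, and use the resulting natural correspondence between their double points and between the $4k$ strands emanating from these double points. Suppose that, for each double point, $K_0$ and $K_1$ agree (up to reparametrization) on the small neighborhoods of corresponding double points, so that in particular corresponding strands enter the upper half plane $\{y>0\}$ at the same places and the parts of $K_0$ and $K_1$ lying over $\{y\le 0\}$ coincide. Then $K_0$ and $K_1$ are isotopic through $k$-singular long knots (i.e. they are the same singular knot).
   Context: A (singular) long knot is an immersion $K=(K_x,K_y,K_z):\mathbb R\to\mathbb R^3$ running from $(-\infty,0,-\infty)$ to $(\infty,0,\infty)$, embedded except at finitely many transverse double points; $k$-singular means exactly $k$ double points. The underlying chord diagram is the line with chords joining the pairs of parameters mapped to the same double point. $K$ is almost monotone if: $K_z(s)=s$ for all $s$ except in small neighborhoods of the double points; near the smaller of the two parameter values visiting a double point also $K_z(s)=s$, while near the larger one the knot dives vertically down to the lower strand at the double point and then climbs vertically back up; and the projection to the $xy$-plane lies in the upper half plane $\{y>0\}$ except possibly the projections of small neighborhoods of some double points, which may extend slightly into $\{y\le 0\}$. A double point whose projection lies in the lower half plane is exposed; $K$ is fully exposed if all its double points are exposed. *)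

theory Defs
  imports "HOL-Analysis.Analysis"
begin

type_synonym pt = "real \<times> real \<times> real"

definition px :: "pt \<Rightarrow> real" where "px p = fst p"
definition py :: "pt \<Rightarrow> real" where "py p = fst (snd p)"
definition pz :: "pt \<Rightarrow> real" where "pz p = snd (snd p)"

definition diag_line :: "real \<Rightarrow> pt" where "diag_line s = (s, 0, s)"

definition double_points :: "(real \<Rightarrow> pt) \<Rightarrow> (real \<times> real) set" where
  "double_points K = {(a, b). a < b \<and> K a = K b}"

definition chord_ends :: "(real \<Rightarrow> pt) \<Rightarrow> real set" where
  "chord_ends K = fst ` double_points K \<union> snd ` double_points K"

definition immersion :: "(real \<Rightarrow> pt) \<Rightarrow> bool" where
  "immersion K \<longleftrightarrow> K C1_differentiable_on UNIV \<and> (\<forall>s. vector_derivative K (at s) \<noteq> 0)"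

definition long_knot :: "(real \<Rightarrow> pt) \<Rightarrow> bool" where
  "long_knot K \<longleftrightarrow> immersion K
     \<and> ((\<lambda>s. K s - diag_line s) \<longlongrightarrow> 0) at_top
     \<and> ((\<lambda>s. K s - diag_line s) \<longlongrightarrow> 0) at_bot
     \<and> ((\<lambda>s. vector_derivative K (at s)) \<longlongrightarrow> (1, 0, 1)) at_top
     \<and> ((\<lambda>s. vector_derivative K (at s)) \<longlongrightarrow> (1, 0, 1)) at_bot"

definition k_singular :: "nat \<Rightarrow> (real \<Rightarrow> pt) \<Rightarrow> bool" where
  "k_singular k K \<longleftrightarrow> long_knot K
     \<and> finite (double_points K) \<and> card (double_points K) = k
     \<and> (\<forall>(a, b) \<in> double_points K. \<forall>(c, d) \<in> double_points K.
           (a, b) \<noteq> (c, d) \<longrightarrow> {a, b} \<inter> {c, d} = {})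
     \<and> (\<forall>(a, b) \<in> double_points K. \<forall>\<alpha> \<beta> :: real.
           \<alpha> *\<^sub>R vector_derivative K (at a) + \<beta> *\<^sub>R vector_derivative K (at b) = 0
           \<longrightarrow> \<alpha> = 0 \<and> \<beta> = 0)"

text \<open>The dive of the upper strand (parameter b) near a double point, inside the
  neighbourhood V of b: outside a subinterval [c,d] the height is z = s; on [c,d] the
  knot goes down to the double point and back, staying between the lower height and s,
  over the same side of the line y = 0 as the double point.\<close>
definition dive :: "(real \<Rightarrow> pt) \<Rightarrow> real \<Rightarrow> real set \<Rightarrow> bool" where
  "dive K b V \<longleftrightarrow> (\<exists>c d. c < b \<and> b < d \<and> {c..d} \<subseteq> V
     \<and> (\<forall>s \<in> V - {c..d}. pz (K s) = s)
     \<and> (\<forall>s \<in> {c..d}. pz (K b) \<le> pz (K s) \<and> pz (K s) \<le> s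
                     \<and> (py (K s) \<le> 0 \<longleftrightarrow> py (K b) \<le> 0)))"

definition almost_monotone_on :: "(real \<Rightarrow> pt) \<Rightarrow> (real \<Rightarrow> real set) \<Rightarrow> bool" where
  "almost_monotone_on K U \<longleftrightarrow>
     (\<forall>p \<in> chord_ends K. \<exists>l r. l < p \<and> p < r \<and> U p = {l<..<r})
     \<and> (\<forall>p \<in> chord_ends K. \<forall>q \<in> chord_ends K. p \<noteq> q \<longrightarrow> U p \<inter> U q = {})
     \<and> (\<forall>s. s \<notin> (\<Union>p \<in> chord_ends K. U p) \<longrightarrow> pz (K s) = s \<and> py (K s) > 0)
     \<and> (\<forall>(a, b) \<in> double_points K. (\<forall>s \<in> U a. pz (K s) = s) \<and> dive K b (U b))"

definition almost_monotone :: "(real \<Rightarrow> pt) \<Rightarrow> bool" where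
  "almost_monotone K \<longleftrightarrow> (\<exists>U. almost_monotone_on K U)"

definition fully_exposed :: "(real \<Rightarrow> pt) \<Rightarrow> bool" where
  "fully_exposed K \<longleftrightarrow> (\<forall>(a, b) \<in> double_points K. py (K a) \<le> 0)"

definition singular_isotopic :: "nat \<Rightarrow> (real \<Rightarrow> pt) \<Rightarrow> (real \<Rightarrow> pt) \<Rightarrow> bool" where
  "singular_isotopic k K0 K1 \<longleftrightarrow> (\<exists>H :: real \<Rightarrow> real \<Rightarrow> pt.
     H 0 = K0 \<and> H 1 = K1
     \<and> (\<forall>t \<in> {0..1}. k_singular k (H t))
     \<and> (\<exists>Dt Ds. (\<forall>t \<in> {0..1}. \<forall>s.
                   ((\<lambda>u. H u s) has_vector_derivative Dt t s) (at t within {0..1})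
                 \<and> (H t has_vector_derivative Ds t s) (at s))
               \<and> continuous_on ({0..1} \<times> UNIV) (\<lambda>(t, s). Dt t s)
               \<and> continuous_on ({0..1} \<times> UNIV) (\<lambda>(t, s). Ds t s))
     \<and> (\<forall>e > 0. \<exists>R. \<forall>t \<in> {0..1}. \<forall>s. R \<le> \<bar>s\<bar> \<longrightarrow>
           norm (H t s - diag_line s) < e
         \<and> norm (vector_derivative (H t) (at s) - (1, 0, 1)) < e))"

end

theory Submission
  imports Defs
begin


lemma comp_deriv:
  fixes K0 K1 :: "real \<Rightarrow> 'a::real_inner" and ch :: "real \<Rightarrow> real"
  assumes d0: "(K0 has_vector_derivative v0) (at (ch s0))" and v0: "v0 \<noteq> 0"
    and d1: "(K1 has_vector_derivative v1) (at s0)"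
    and N: "open N" "s0 \<in> N" and eq: "\<forall>s\<in>N. K1 s = K0 (ch s)"
    and cont: "isCont ch s0" and inj: "inj_on ch N"
  shows "(ch has_real_derivative (v1 \<bullet> v0) / (v0 \<bullet> v0)) (at s0)"
proof -
  define u0 where "u0 = ch s0"
  define f where "f u = K0 u \<bullet> v0" for u
  define g where "g s = K1 s \<bullet> v0" for s
  have bl: "bounded_linear (\<lambda>x::'a. x \<bullet> v0)" by (rule bounded_linear_inner_left)
  have df: "(f has_real_derivative (v0 \<bullet> v0)) (at u0)"
    unfolding has_real_derivative_iff_has_vector_derivative f_def
    using bounded_linear.has_vector_derivative[OF bl d0[folded u0_def]] by simp
  have dg: "(g has_real_derivative (v1 \<bullet> v0)) (at s0)"
    unfolding has_real_derivative_iff_has_vector_derivative g_def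
    using bounded_linear.has_vector_derivative[OF bl d1] by simp
  have Sf: "((\<lambda>u. (f u - f u0) / (u - u0)) \<longlongrightarrow> v0 \<bullet> v0) (at u0)"
    using df by (simp add: has_field_derivative_iff)
  have Sg: "((\<lambda>s. (g s - g s0) / (s - s0)) \<longlongrightarrow> v1 \<bullet> v0) (at s0)"
    using dg by (simp add: has_field_derivative_iff)
  have evN: "eventually (\<lambda>s. s \<in> N) (at s0)"
    using N eventually_at_topological by blast
  have limch: "filterlim ch (at u0) (at s0)"
  proof (rule filterlim_atI)
    show "(ch \<longlongrightarrow> u0) (at s0)" using cont unfolding u0_def isCont_def .
    show "eventually (\<lambda>s. ch s \<noteq> u0) (at s0)"
      using evN unfolding eventually_at_filter
      by eventually_elim (use inj N(2) in \<open>auto simp: u0_def inj_on_def\<close>)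
  qed
  have Sf2: "((\<lambda>s. (f (ch s) - f u0) / (ch s - u0)) \<longlongrightarrow> v0 \<bullet> v0) (at s0)"
    using filterlim_compose[OF Sf limch] by (simp add: o_def)
  have pos: "v0 \<bullet> v0 \<noteq> 0" using v0 by simp
  have lim: "((\<lambda>s. ((g s - g s0) / (s - s0)) / ((f (ch s) - f u0) / (ch s - u0))) \<longlongrightarrow> (v1 \<bullet> v0) / (v0 \<bullet> v0)) (at s0)"
    by (rule tendsto_divide[OF Sg Sf2 pos])
  have ev1: "eventually (\<lambda>s. (f (ch s) - f u0) / (ch s - u0) \<noteq> 0) (at s0)"
    by (rule tendsto_imp_eventually_ne[OF Sf2 pos])
  have eventually_neq: "eventually (\<lambda>s. s \<noteq> s0) (at s0)" by (simp add: eventually_at_filter)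
  have ev2: "eventually (\<lambda>s. ch s \<noteq> u0) (at s0)"
    using limch unfolding filterlim_at by auto
  have "eventually (\<lambda>s. ((g s - g s0) / (s - s0)) / ((f (ch s) - f u0) / (ch s - u0)) = (ch s - ch s0) / (s - s0)) (at s0)"
    using evN ev1 ev2 eventually_neq
  proof (eventually_elim)
    case (elim s)
    have "s \<noteq> s0" using elim(4) .
    have gs: "g s = f (ch s)" "g s0 = f u0" using eq elim(1) N(2) by (auto simp: f_def g_def u0_def)
    have "f (ch s) - f u0 \<noteq> 0" using elim(2) by auto
    moreover have "\<And>A b c::real. A \<noteq> 0 \<Longrightarrow> b \<noteq> 0 \<Longrightarrow> c \<noteq> 0 \<Longrightarrow> (A / b) / (A / c) = c / b"
      by (simp add: field_simps)
    ultimately show ?case using elim(3) \<open>s \<noteq> s0\<close> unfolding gs u0_def by simp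
  qed
  then have "((\<lambda>s. (ch s - ch s0) / (s - s0)) \<longlongrightarrow> (v1 \<bullet> v0) / (v0 \<bullet> v0)) (at s0)"
    using lim by (rule Lim_transform_eventually[rotated]) 
  then show ?thesis by (simp add: has_field_derivative_iff)
qed



lemma immersion_D:
  assumes "immersion K"
  shows "\<forall>s. (K has_vector_derivative vector_derivative K (at s)) (at s)"
    "continuous_on UNIV (\<lambda>s. vector_derivative K (at s))"
    "\<forall>s. vector_derivative K (at s) \<noteq> 0"
  using assms unfolding immersion_def C1_differentiable_on_eq
  by (auto simp: vector_derivative_works)

locale isot =
  fixes k :: nat and K0 K1 :: "real \<Rightarrow> pt" and ch :: "real \<Rightarrow> real" and N C D :: "real set"
  assumes ks0: "k_singular k K0" and lk1: "long_knot K1"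
  and openN: "open N" and closedC: "closed C" and boundedC: "bounded C" and CN: "C \<subseteq> N"
  and ch_cont: "continuous_on UNIV ch" and ch_id: "\<forall>s. s \<notin> C \<longrightarrow> ch s = s"
  and ch_inj: "inj_on ch N"
  and eqN: "\<forall>s\<in>N. K1 s = K0 (ch s)"
  and convN: "\<forall>s\<in>N. \<forall>t\<in>{0..1}. (1 - t) * s + t * ch s \<in> N"
  and outN: "\<forall>s. s \<notin> N \<longrightarrow> pz (K0 s) = s \<and> py (K0 s) > 0 \<and> pz (K1 s) = s \<and> py (K1 s) > 0"
  and ypos: "\<forall>u. py (K0 u) > 0 \<longrightarrow> pz (K0 u) = u"
  and closedD: "closed D" and DN: "D \<subseteq> N"
  and offD: "\<forall>u. u \<notin> D \<longrightarrow> pz (K0 u) = u \<and> pz (K1 u) = u"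
  and endsN: "chord_ends K0 \<subseteq> N"
begin

definition V0 where "V0 s = vector_derivative K0 (at s)"
definition V1 where "V1 s = vector_derivative K1 (at s)"
definition ch' where "ch' s = (if s \<in> N then (V1 s \<bullet> V0 (ch s)) / (V0 (ch s) \<bullet> V0 (ch s)) else 1)"

lemma lk0: "long_knot K0" using ks0 unfolding k_singular_def by auto

lemma V0: "\<And>s. (K0 has_vector_derivative V0 s) (at s)" "continuous_on UNIV V0" "\<And>s. V0 s \<noteq> 0"
  using immersion_D[of K0] lk0 unfolding long_knot_def V0_def by auto

lemma V1: "\<And>s. (K1 has_vector_derivative V1 s) (at s)" "continuous_on UNIV V1" "\<And>s. V1 s \<noteq> 0"
  using immersion_D[of K1] lk1 unfolding long_knot_def V1_def by auto

lemma ch_isCont: "isCont ch s"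
  using ch_cont continuous_on_eq_continuous_at by blast

lemma ch_deriv_out: assumes "s \<notin> C" shows "(ch has_real_derivative 1) (at s)"
proof (rule has_field_derivative_transform_within_open[of "\<lambda>x. x" 1 s "-C"])
  show "((\<lambda>x. x) has_real_derivative 1) (at s)" by (rule DERIV_ident)
qed (use assms closedC ch_id in auto)

lemma ch_deriv: "(ch has_real_derivative ch' s) (at s)"
proof (cases "s \<in> N")
  case True
  show ?thesis using comp_deriv[OF V0(1) V0(3) V1(1) openN True eqN ch_isCont ch_inj] True
    by (simp add: ch'_def)
next
  case False
  then have "s \<notin> C" using CN by auto
  then show ?thesis using ch_deriv_out False unfolding ch'_def by simp
qed

lemma ch'_out: "s \<notin> C \<Longrightarrow> ch' s = 1"
  using DERIV_unique[OF ch_deriv ch_deriv_out] by blast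

lemma ch'_cont: "isCont ch' s"
proof (cases "s \<in> N")
  case True
  have c1: "isCont (\<lambda>s. (V1 s \<bullet> V0 (ch s)) / (V0 (ch s) \<bullet> V0 (ch s))) s"
  proof -
    have 1: "isCont V1 s" using V1(2) continuous_on_eq_continuous_at by blast
    have "isCont V0 (ch s)" using V0(2) continuous_on_eq_continuous_at by blast
    then have 2: "isCont (\<lambda>s. V0 (ch s)) s" using isCont_o2[OF ch_isCont] by blast
    have 3: "V0 (ch s) \<bullet> V0 (ch s) \<noteq> 0" using V0(3) by simp
    show ?thesis using 1 2 3 by (intro continuous_intros) auto
  qed
  have e1: "eventually (\<lambda>x. ch' x = (V1 x \<bullet> V0 (ch x)) / (V0 (ch x) \<bullet> V0 (ch x))) (nhds s)"
    unfolding eventually_nhds using openN True by (auto simp: ch'_def intro!: exI[of _ N])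
  show ?thesis using isCont_cong[OF e1] c1 by simp
next
  case False
  then have "s \<notin> C" using CN by auto
  have "eventually (\<lambda>x. ch' x = 1) (nhds s)"
    unfolding eventually_nhds using closedC \<open>s \<notin> C\<close> ch'_out
    by (auto intro!: exI[of _ "-C"])
  then show ?thesis using isCont_cong[of ch' "\<lambda>_. 1" s] by simp
qed

lemma V1_eq: assumes "s \<in> N" shows "V1 s = ch' s *\<^sub>R V0 (ch s)"
proof -
  have "((K0 \<circ> ch) has_vector_derivative ch' s *\<^sub>R V0 (ch s)) (at s)"
    by (rule vector_diff_chain_at[OF ch_deriv[unfolded has_real_derivative_iff_has_vector_derivative] V0(1)])
  then have "(K1 has_vector_derivative ch' s *\<^sub>R V0 (ch s)) (at s)"
    by (rule has_vector_derivative_transform_within_open[OF _ openN assms]) (use eqN in auto)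
  then show ?thesis using vector_derivative_unique_at V1(1) by blast
qed

lemma ch'_ne: "ch' s \<noteq> 0"
proof (cases "s \<in> N")
  case True then show ?thesis using V1_eq V1(3) by force
next
  case False then have "s \<notin> C" using CN by auto
  then show ?thesis using ch'_out by simp
qed

lemma ch'_pos: "ch' s > 0"
proof (rule ccontr)
  assume "\<not> ch' s > 0"
  then have neg: "ch' s < 0" using ch'_ne[of s] by linarith
  obtain R where R: "\<forall>x\<in>C. \<bar>x\<bar> \<le> R" using boundedC bounded_real by blast
  define b where "b = \<bar>s\<bar> + \<bar>R\<bar> + 1"
  have b: "b \<notin> C" "s \<le> b" using R unfolding b_def by force+
  have "continuous_on {s..b} ch'" using ch'_cont continuous_at_imp_continuous_on by blast
  then obtain x where "s \<le> x" "x \<le> b" "ch' x = 0"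
    using IVT'[of ch' s 0 b] neg ch'_out[OF b(1)] b(2) by auto
  then show False using ch'_ne by auto
qed

end


lemma pz_bl: "bounded_linear pz"
  unfolding pz_def[abs_def] by (rule bounded_linear_compose[OF bounded_linear_snd bounded_linear_snd])

lemma py_bl: "bounded_linear py"
  unfolding py_def[abs_def] by (rule bounded_linear_compose[OF bounded_linear_fst bounded_linear_snd])

lemma pz_lin: "pz (a + b) = pz a + pz b" "pz (c *\<^sub>R a) = c * pz a" "pz (a - b) = pz a - pz b"
  by (auto simp: pz_def)
lemma py_lin: "py (a + b) = py a + py b" "py (c *\<^sub>R a) = c * py a" "py (a - b) = py a - py b"
  by (auto simp: py_def)

lemma pz_deriv:
  assumes d: "(K has_vector_derivative v) (at s)" and D: "closed D" "s \<notin> D"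
    and z: "\<forall>u. u \<notin> D \<longrightarrow> pz (K u) = u"
  shows "pz v = 1"
proof -
  have "((\<lambda>u. pz (K u)) has_vector_derivative pz v) (at s)"
    using bounded_linear.has_vector_derivative[OF pz_bl d] by simp
  then have a: "((\<lambda>u. pz (K u)) has_real_derivative pz v) (at s)"
    by (simp add: has_real_derivative_iff_has_vector_derivative)
  have b: "((\<lambda>u. pz (K u)) has_real_derivative 1) (at s)"
    by (rule has_field_derivative_transform_within_open[OF DERIV_ident, of "-D"]) (use D z in auto)
  show ?thesis using DERIV_unique[OF a b] .
qed

lemma convex_norm_less:
  fixes a b :: "'a::real_normed_vector"
  assumes "0 \<le> t" "t \<le> 1" "norm a < e" "norm b < e"
  shows "norm ((1 - t) *\<^sub>R a + t *\<^sub>R b) < e"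
proof -
  have "norm ((1 - t) *\<^sub>R a + t *\<^sub>R b) \<le> (1 - t) * norm a + t * norm b"
    using norm_triangle_ineq[of "(1 - t) *\<^sub>R a" "t *\<^sub>R b"] assms by simp
  also have "\<dots> \<le> (1 - t) * max (norm a) (norm b) + t * max (norm a) (norm b)"
    using assms by (intro add_mono mult_left_mono) auto
  also have "\<dots> = max (norm a) (norm b)" by (simp add: algebra_simps)
  also have "\<dots> < e" using assms by simp
  finally show ?thesis .
qed

lemma ev_abs:
  assumes "eventually P at_top" "eventually P (at_bot :: real filter)"
  shows "\<exists>R. \<forall>s. R \<le> \<bar>s\<bar> \<longrightarrow> P s"
proof -
  obtain R1 where R1: "\<forall>s\<ge>R1. P s" using assms(1) eventually_at_top_linorder by blast
  obtain R2 where R2: "\<forall>s\<le>R2. P s" using assms(2) eventually_at_bot_linorder by blast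
  show ?thesis
    by (rule exI[of _ "\<bar>R1\<bar> + \<bar>R2\<bar>"]) (use R1 R2 in \<open>auto simp: abs_if split: if_splits\<close>)
qed

lemma tendsto_ev_norm:
  assumes "(f \<longlongrightarrow> l) F" "e > 0"
  shows "eventually (\<lambda>x. norm (f x - l) < e) F"
  using assms tendsto_iff[of f l F] by (simp add: dist_norm)

context isot begin

definition ps where "ps t s = (1 - t) * s + t * ch s"
definition ps' where "ps' t s = (1 - t) + t * ch' s"
definition H where "H t s = K0 (ps t s) + t *\<^sub>R (K1 s - K0 (ch s))"
definition Ds where "Ds t s = ps' t s *\<^sub>R V0 (ps t s) + t *\<^sub>R (V1 s - ch' s *\<^sub>R V0 (ch s))"
definition Dt where "Dt t s = (ch s - s) *\<^sub>R V0 (ps t s) + (K1 s - K0 (ch s))"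

lemma H0: "H 0 = K0" by (auto simp: H_def ps_def)
lemma H1: "H 1 = K1" by (auto simp: H_def ps_def)

lemma ps_deriv: "(ps t has_real_derivative ps' t s) (at s)"
  unfolding ps_def ps'_def
  by (auto intro!: derivative_eq_intros ch_deriv)

lemma Ds_deriv: "(H t has_vector_derivative Ds t s) (at s)"
proof -
  have a: "((K0 \<circ> ps t) has_vector_derivative ps' t s *\<^sub>R V0 (ps t s)) (at s)"
    by (rule vector_diff_chain_at[OF ps_deriv[unfolded has_real_derivative_iff_has_vector_derivative] V0(1)])
  have b: "((K0 \<circ> ch) has_vector_derivative ch' s *\<^sub>R V0 (ch s)) (at s)"
    by (rule vector_diff_chain_at[OF ch_deriv[unfolded has_real_derivative_iff_has_vector_derivative] V0(1)])
  have "((\<lambda>s. (K0 \<circ> ps t) s + t *\<^sub>R (K1 s - (K0 \<circ> ch) s)) has_vector_derivative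
     ps' t s *\<^sub>R V0 (ps t s) + t *\<^sub>R (V1 s - ch' s *\<^sub>R V0 (ch s))) (at s)"
    by (intro has_vector_derivative_add bounded_linear.has_vector_derivative[OF bounded_linear_scaleR_right] has_vector_derivative_diff a b V1(1))
  then show ?thesis unfolding H_def Ds_def by (simp add: o_def)
qed

lemma Dt_deriv: "((\<lambda>u. H u s) has_vector_derivative Dt t s) (at t within {0..1})"
proof -
  have p: "((\<lambda>u. ps u s) has_vector_derivative (ch s - s)) (at t within {0..1})"
    unfolding ps_def has_real_derivative_iff_has_vector_derivative[symmetric]
    by (auto intro!: derivative_eq_intros)
  have a: "(((\<lambda>u. K0 (ps u s))) has_vector_derivative (ch s - s) *\<^sub>R V0 (ps t s)) (at t within {0..1})"
    using vector_diff_chain_within[OF p has_vector_derivative_at_within[OF V0(1)]] by (simp add: o_def)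
  have b: "((\<lambda>u. u *\<^sub>R (K1 s - K0 (ch s))) has_vector_derivative (K1 s - K0 (ch s))) (at t within {0..1})"
    unfolding has_vector_derivative_def by (rule bounded_linear_imp_has_derivative[OF bounded_linear_scaleR_left])
  show ?thesis unfolding H_def Dt_def using has_vector_derivative_add[OF a b] by simp
qed

lemma ch_cont': "continuous_on S ch" using ch_cont continuous_on_subset by blast

lemma V0_comp_cont:
  assumes "continuous_on S f" shows "continuous_on S (\<lambda>x. V0 (f x))"
  using continuous_on_compose2[OF V0(2) assms] by simp

lemma ch'_contg: "continuous_on S ch'"
  using ch'_cont continuous_at_imp_continuous_on continuous_on_subset by blast

lemma V1_contg: "continuous_on S V1" using V1(2) continuous_on_subset by blast

lemma K_contg: "continuous_on S K0" "continuous_on S K1"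
proof -
  have "\<forall>x. isCont K0 x" using V0(1) has_vector_derivative_continuous by blast
  then show "continuous_on S K0" using continuous_at_imp_continuous_on by blast
  have "\<forall>x. isCont K1 x" using V1(1) has_vector_derivative_continuous by blast
  then show "continuous_on S K1" using continuous_at_imp_continuous_on by blast
qed

lemma ps_cont2: "continuous_on S (\<lambda>p. ps (fst p) (snd p))"
  unfolding ps_def
  by (intro continuous_intros continuous_on_compose2[OF ch_cont]) auto

lemma Ds_cont: "continuous_on S (\<lambda>(t, s). Ds t s)"
proof -
  have c1: "continuous_on S (\<lambda>p. V0 (ps (fst p) (snd p)))" by (rule V0_comp_cont[OF ps_cont2])
  have c2: "continuous_on S (\<lambda>p. V0 (ch (snd p)))"
    by (rule V0_comp_cont, rule continuous_on_compose2[OF ch_cont]) (auto intro: continuous_intros)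
  have c3: "continuous_on S (\<lambda>p. ch' (snd p))"
    by (rule continuous_on_compose2[OF ch'_contg]) (auto intro: continuous_intros)
  have c4: "continuous_on S (\<lambda>p. V1 (snd p))"
    by (rule continuous_on_compose2[OF V1(2)]) (auto intro: continuous_intros)
  show ?thesis unfolding Ds_def ps'_def case_prod_beta
    by (intro continuous_intros c1 c2 c3 c4)
qed

lemma Dt_cont: "continuous_on S (\<lambda>(t, s). Dt t s)"
proof -
  have c1: "continuous_on S (\<lambda>p. V0 (ps (fst p) (snd p)))" by (rule V0_comp_cont[OF ps_cont2])
  have c2: "continuous_on S (\<lambda>p. K0 (ch (snd p)))"
    by (rule continuous_on_compose2[OF K_contg(1)], rule continuous_on_compose2[OF ch_cont]) (auto intro: continuous_intros)
  have c3: "continuous_on S (\<lambda>p. ch (snd p))"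
    by (rule continuous_on_compose2[OF ch_cont]) (auto intro: continuous_intros)
  have c4: "continuous_on S (\<lambda>p. K1 (snd p))"
    by (rule continuous_on_compose2[OF K_contg(2)]) (auto intro: continuous_intros)
  show ?thesis unfolding Dt_def case_prod_beta
    by (intro continuous_intros c1 c2 c3 c4)
qed

end


context isot begin

lemma ps'_pos: assumes "t \<in> {0..1}" shows "ps' t s > 0"
proof (cases "t = 0")
  case True then show ?thesis by (simp add: ps'_def)
next
  case False
  then have "t * ch' s > 0" using assms ch'_pos[of s] by auto
  then show ?thesis using assms by (simp add: ps'_def)
qed

lemma ps_mono: assumes "t \<in> {0..1}" "x < y" shows "ps t x < ps t y"
  using DERIV_pos_imp_increasing[OF assms(2)] ps_deriv ps'_pos[OF assms(1)] by blast

lemma ps_inj: assumes "t \<in> {0..1}" shows "inj (ps t)"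
  by (rule linorder_injI) (use ps_mono[OF assms] in force)

lemma ps_out: "s \<notin> C \<Longrightarrow> ps t s = s" using ch_id by (simp add: ps_def algebra_simps)

lemma ps_surj: assumes "t \<in> {0..1}" shows "\<exists>x. ps t x = y"
proof -
  obtain R where R: "\<forall>x\<in>C. \<bar>x\<bar> \<le> R" using boundedC bounded_real by blast
  define a where "a = - (\<bar>y\<bar> + \<bar>R\<bar> + 1)"
  define b where "b = \<bar>y\<bar> + \<bar>R\<bar> + 1"
  have ab: "a \<notin> C" "b \<notin> C" using R unfolding a_def b_def by force+
  have "continuous_on {a..b} (ps t)"
    using ps_deriv DERIV_isCont continuous_at_imp_continuous_on by blast
  then show ?thesis using IVT'[of "ps t" a y b] ps_out[OF ab(1)] ps_out[OF ab(2)]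
    unfolding a_def b_def by force
qed

lemma ps_N: assumes "s \<in> N" "t \<in> {0..1}" shows "ps t s \<in> N"
  using convN assms unfolding ps_def by blast

lemma H_N: "s \<in> N \<Longrightarrow> H t s = K0 (ps t s)" using eqN by (simp add: H_def)

lemma H_out: assumes "s \<notin> N" "t \<in> {0..1}"
  shows "pz (H t s) = s" "py (H t s) > 0" "H t s = (1 - t) *\<^sub>R K0 s + t *\<^sub>R K1 s"
proof -
  have "s \<notin> C" using assms CN by auto
  then have e: "ch s = s" "ps t s = s" using ch_id ps_out by auto
  show h: "H t s = (1 - t) *\<^sub>R K0 s + t *\<^sub>R K1 s"
    unfolding H_def e by (simp add: algebra_simps)
  show "pz (H t s) = s" unfolding h using outN assms by (simp add: pz_lin algebra_simps)
  have "(1 - t) * py (K0 s) \<ge> 0" "t * py (K1 s) \<ge> 0" using outN assms by auto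
  moreover have "(1 - t) * py (K0 s) > 0 \<or> t * py (K1 s) > 0"
    using outN assms by (cases "t = 1") auto
  ultimately show "py (H t s) > 0" unfolding h by (simp add: py_lin, linarith)
qed

lemma dp_H_N:
  assumes t: "t \<in> {0..1}" and xy: "(x, y) \<in> double_points (H t)"
  shows "x \<in> N \<and> y \<in> N \<and> (ps t x, ps t y) \<in> double_points K0"
proof -
  have xy': "x < y" "H t x = H t y" using xy by (auto simp: double_points_def)
  have c1: False if "x \<notin> N" "y \<in> N" "H t x = H t y" for x y
  proof -
    have h: "H t y = K0 (ps t y)" using H_N that(2) .
    have "py (K0 (ps t y)) > 0" using H_out(2)[OF that(1) t] that(3) h by simp
    then have "pz (K0 (ps t y)) = ps t y" using ypos by blast
    then have "x = ps t y" using H_out(1)[OF that(1) t] that(3) h by simp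
    then show False using ps_N[OF that(2) t] that(1) by simp
  qed
  have xN: "x \<in> N"
  proof (rule ccontr)
    assume xn: "x \<notin> N"
    show False
    proof (cases "y \<in> N")
      case True show False by (rule c1[OF xn True xy'(2)])
    next
      case False
      then show False using H_out(1)[OF xn t] H_out(1)[OF False t] xy' by simp
    qed
  qed
  have yN: "y \<in> N"
  proof (rule ccontr)
    assume "y \<notin> N" then show False using c1[OF \<open>y \<notin> N\<close> xN] xy'(2) by simp
  qed
  show ?thesis using xN yN xy' ps_mono[OF t] H_N by (auto simp: double_points_def)
qed

lemma dp_H:
  assumes t: "t \<in> {0..1}"
  shows "double_points K0 = (\<lambda>(x, y). (ps t x, ps t y)) ` double_points (H t)"
proof
  show "(\<lambda>(x, y). (ps t x, ps t y)) ` double_points (H t) \<subseteq> double_points K0"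
    using dp_H_N[OF t] by auto
  show "double_points K0 \<subseteq> (\<lambda>(x, y). (ps t x, ps t y)) ` double_points (H t)"
  proof
    fix p assume p: "p \<in> double_points K0"
    then obtain a b where ab: "p = (a, b)" "a < b" "K0 a = K0 b" by (auto simp: double_points_def)
    have abN: "a \<in> N" "b \<in> N" using endsN p ab unfolding chord_ends_def by force+
    obtain x y where xy: "ps t x = a" "ps t y = b" using ps_surj[OF t] by metis
    have inN: "x \<in> N" "y \<in> N"
    proof -
      show "x \<in> N"
      proof (rule ccontr)
        assume "x \<notin> N" then have "x \<notin> C" using CN by auto
        then show False using ps_out[of x t] xy abN \<open>x \<notin> N\<close> by simp
      qed
      show "y \<in> N"
      proof (rule ccontr)
        assume "y \<notin> N" then have "y \<notin> C" using CN by auto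
        then show False using ps_out[of y t] xy abN \<open>y \<notin> N\<close> by simp
      qed
    qed
    have "x < y"
    proof (rule ccontr)
      assume "\<not> x < y"
      then have "y < x \<or> y = x" by auto
      then show False using xy ab(2) ps_mono[OF t, of y x] by auto
    qed
    moreover have "H t x = H t y" using H_N inN xy ab by simp
    ultimately have "(x, y) \<in> double_points (H t)" by (simp add: double_points_def)
    then show "p \<in> (\<lambda>(x, y). (ps t x, ps t y)) ` double_points (H t)"
      using ab xy by force
  qed
qed

lemma dp_inj: assumes t: "t \<in> {0..1}" shows "inj_on (\<lambda>(x, y). (ps t x, ps t y)) S"
  using ps_inj[OF t] by (auto simp: inj_on_def inj_def)

lemma vd_H: "vector_derivative (H t) (at s) = Ds t s"
  using vector_derivative_at[OF Ds_deriv] .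

lemma Ds_N: "s \<in> N \<Longrightarrow> Ds t s = ps' t s *\<^sub>R V0 (ps t s)"
  using V1_eq by (simp add: Ds_def)

lemma Ds_out: assumes "s \<notin> C" shows "Ds t s = (1 - t) *\<^sub>R V0 s + t *\<^sub>R V1 s"
  using ch'_out[OF assms] ch_id assms ps_out[OF assms]
  by (simp add: Ds_def ps'_def algebra_simps)

lemma Ds_ne: assumes t: "t \<in> {0..1}" shows "Ds t s \<noteq> 0"
proof (cases "s \<in> N")
  case True then show ?thesis using Ds_N ps'_pos[OF t, of s] V0(3) by simp
next
  case False
  then have sC: "s \<notin> C" "s \<notin> D" using CN DN by auto
  have "pz (V0 s) = 1" using pz_deriv[OF V0(1) closedD sC(2)] offD by blast
  moreover have "pz (V1 s) = 1" using pz_deriv[OF V1(1) closedD sC(2)] offD by blast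
  ultimately have "pz (Ds t s) = 1" unfolding Ds_out[OF sC(1)] by (simp add: pz_lin algebra_simps)
  then show ?thesis by (auto simp: pz_def)
qed

end


context isot begin

lemma H_outC: assumes "s \<notin> C" shows "H t s = (1 - t) *\<^sub>R K0 s + t *\<^sub>R K1 s"
  using ch_id assms ps_out[OF assms] unfolding H_def by (simp add: algebra_simps)

lemma H_diag: assumes "s \<notin> C"
  shows "H t s - diag_line s = (1 - t) *\<^sub>R (K0 s - diag_line s) + t *\<^sub>R (K1 s - diag_line s)"
  unfolding H_outC[OF assms] by (simp add: algebra_simps)

lemma Ds_diag: assumes "s \<notin> C"
  shows "Ds t s - (1, 0, 1) = (1 - t) *\<^sub>R (V0 s - (1, 0, 1)) + t *\<^sub>R (V1 s - (1, 0, 1))"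
  unfolding Ds_out[OF assms] by (simp add: algebra_simps)

lemma ev_notC: "eventually (\<lambda>s. s \<notin> C) at_top" "eventually (\<lambda>s. s \<notin> C) (at_bot :: real filter)"
proof -
  obtain R where R: "\<forall>x\<in>C. \<bar>x\<bar> \<le> R" using boundedC bounded_real by blast
  show "eventually (\<lambda>s. s \<notin> C) at_top"
    unfolding eventually_at_top_linorder using R by (intro exI[of _ "\<bar>R\<bar> + 1"]) force
  show "eventually (\<lambda>s. s \<notin> C) (at_bot :: real filter)"
    unfolding eventually_at_bot_linorder using R by (intro exI[of _ "- \<bar>R\<bar> - 1"]) force
qed

lemma lims:
  "((\<lambda>s. K0 s - diag_line s) \<longlongrightarrow> 0) at_top" "((\<lambda>s. K0 s - diag_line s) \<longlongrightarrow> 0) at_bot"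
  "(V0 \<longlongrightarrow> (1, 0, 1)) at_top" "(V0 \<longlongrightarrow> (1, 0, 1)) at_bot"
  "((\<lambda>s. K1 s - diag_line s) \<longlongrightarrow> 0) at_top" "((\<lambda>s. K1 s - diag_line s) \<longlongrightarrow> 0) at_bot"
  "(V1 \<longlongrightarrow> (1, 0, 1)) at_top" "(V1 \<longlongrightarrow> (1, 0, 1)) at_bot"
  using lk0 lk1 unfolding long_knot_def V0_def[abs_def] V1_def[abs_def] by auto

lemma lim_conv:
  fixes f g :: "real \<Rightarrow> pt"
  assumes "(f \<longlongrightarrow> l) F" "(g \<longlongrightarrow> l) F"
  shows "((\<lambda>s. (1 - t) *\<^sub>R f s + t *\<^sub>R g s) \<longlongrightarrow> l) F"
proof -
  have "((\<lambda>s. (1 - t) *\<^sub>R f s + t *\<^sub>R g s) \<longlongrightarrow> (1 - t) *\<^sub>R l + t *\<^sub>R l) F"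
    by (intro tendsto_intros assms)
  moreover have "(1 - t) *\<^sub>R l + t *\<^sub>R l = l" by (simp add: algebra_simps)
  ultimately show ?thesis by simp
qed

lemma H_ks: assumes t: "t \<in> {0..1}" shows "k_singular k (H t)"
proof -
  have DsC: "continuous_on UNIV (Ds t)"
  proof -
    have "continuous_on UNIV (\<lambda>s::real. (t, s))" by (intro continuous_intros)
    then show ?thesis using continuous_on_compose2[OF Ds_cont[of UNIV], of UNIV "\<lambda>s. (t, s)"] by simp
  qed
  have imm: "immersion (H t)"
    unfolding immersion_def C1_differentiable_on_def vd_H
    using Ds_deriv DsC Ds_ne[OF t] by blast
  have l1: "((\<lambda>s. H t s - diag_line s) \<longlongrightarrow> 0) F" if F: "F = at_top \<or> F = at_bot" for F
  proof -
    have ev: "eventually (\<lambda>s. s \<notin> C) F" using F ev_notC by auto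
    have "((\<lambda>s. (1 - t) *\<^sub>R (K0 s - diag_line s) + t *\<^sub>R (K1 s - diag_line s)) \<longlongrightarrow> 0) F"
      by (rule lim_conv) (use F lims in auto)
    then show ?thesis
      by (rule Lim_transform_eventually) (use ev H_diag in \<open>auto elim: eventually_mono\<close>)
  qed
  have l2: "((\<lambda>s. vector_derivative (H t) (at s)) \<longlongrightarrow> (1, 0, 1)) F" if F: "F = at_top \<or> F = at_bot" for F
  proof -
    have ev: "eventually (\<lambda>s. s \<notin> C) F" using F ev_notC by auto
    have "((\<lambda>s. (1 - t) *\<^sub>R V0 s + t *\<^sub>R V1 s) \<longlongrightarrow> (1, 0, 1)) F"
      by (rule lim_conv) (use F lims in auto)
    then show ?thesis unfolding vd_H
      by (rule Lim_transform_eventually) (use ev Ds_out in \<open>auto elim: eventually_mono\<close>)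
  qed
  have lk: "long_knot (H t)" unfolding long_knot_def using imm l1 l2 by auto
  let ?f = "\<lambda>(x, y). (ps t x, ps t y)"
  have dpe: "double_points K0 = ?f ` double_points (H t)" by (rule dp_H[OF t])
  have inj: "inj_on ?f (double_points (H t))" by (rule dp_inj[OF t])
  have fin0: "finite (double_points K0)" and card0: "card (double_points K0) = k"
    and disj0: "\<forall>(a, b) \<in> double_points K0. \<forall>(c, d) \<in> double_points K0.
           (a, b) \<noteq> (c, d) \<longrightarrow> {a, b} \<inter> {c, d} = {}"
    and tr0: "\<forall>(a, b) \<in> double_points K0. \<forall>\<alpha> \<beta> :: real.
           \<alpha> *\<^sub>R V0 a + \<beta> *\<^sub>R V0 b = 0 \<longrightarrow> \<alpha> = 0 \<and> \<beta> = 0"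
    using ks0 unfolding k_singular_def V0_def by auto
  have fin: "finite (double_points (H t))"
    using fin0 dpe inj finite_imageD by metis
  have card: "card (double_points (H t)) = k"
    using card0 dpe card_image[OF inj] by simp
  have pinj: "inj (ps t)" by (rule ps_inj[OF t])
  have disj1: "{a, b} \<inter> {c, d} = {}" if ab: "(a, b) \<in> double_points (H t)" and cd: "(c, d) \<in> double_points (H t)"
      and ne: "(a, b) \<noteq> (c, d)" for a b c d
  proof -
    have m: "(ps t a, ps t b) \<in> double_points K0" "(ps t c, ps t d) \<in> double_points K0"
      using dp_H_N[OF t ab] dp_H_N[OF t cd] by auto
    have "(ps t a, ps t b) \<noteq> (ps t c, ps t d)" using ne pinj by (auto simp: inj_def)
    then have "{ps t a, ps t b} \<inter> {ps t c, ps t d} = {}" using disj0 m by fastforce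
    then show ?thesis using pinj by (auto simp: inj_def)
  qed
  have disj: "\<forall>(a, b) \<in> double_points (H t). \<forall>(c, d) \<in> double_points (H t).
           (a, b) \<noteq> (c, d) \<longrightarrow> {a, b} \<inter> {c, d} = {}"
    using disj1 by blast
  have tr: "\<forall>(a, b) \<in> double_points (H t). \<forall>\<alpha> \<beta> :: real.
           \<alpha> *\<^sub>R vector_derivative (H t) (at a) + \<beta> *\<^sub>R vector_derivative (H t) (at b) = 0
           \<longrightarrow> \<alpha> = 0 \<and> \<beta> = 0"
  proof (clarify)
    fix a b \<alpha> \<beta>
    assume ab: "(a, b) \<in> double_points (H t)"
      and eq: "\<alpha> *\<^sub>R vector_derivative (H t) (at a) + \<beta> *\<^sub>R vector_derivative (H t) (at b) = 0"
    have N: "a \<in> N" "b \<in> N" "(ps t a, ps t b) \<in> double_points K0" using dp_H_N[OF t ab] by auto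
    have "(\<alpha> * ps' t a) *\<^sub>R V0 (ps t a) + (\<beta> * ps' t b) *\<^sub>R V0 (ps t b) = 0"
      using eq unfolding vd_H Ds_N[OF N(1)] Ds_N[OF N(2)] by simp
    then have "\<alpha> * ps' t a = 0 \<and> \<beta> * ps' t b = 0" using tr0 N(3) by blast
    then show "\<alpha> = 0 \<and> \<beta> = 0" using ps'_pos[OF t, of a] ps'_pos[OF t, of b] by auto
  qed
  show ?thesis unfolding k_singular_def using lk fin card disj tr by blast
qed

theorem isotopic: "singular_isotopic k K0 K1"
  unfolding singular_isotopic_def
proof (intro exI conjI)
  show "H 0 = K0" by (rule H0)
  show "H 1 = K1" by (rule H1)
  show "\<forall>t\<in>{0..1}. k_singular k (H t)" using H_ks by blast
  show "\<forall>t\<in>{0..1}. \<forall>s. ((\<lambda>u. H u s) has_vector_derivative Dt t s) (at t within {0..1})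
      \<and> (H t has_vector_derivative Ds t s) (at s)"
    using Dt_deriv Ds_deriv by blast
  show "continuous_on ({0..1} \<times> UNIV) (\<lambda>(t, s). Dt t s)" by (rule Dt_cont)
  show "continuous_on ({0..1} \<times> UNIV) (\<lambda>(t, s). Ds t s)" by (rule Ds_cont)
  show "\<forall>e>0. \<exists>R. \<forall>t\<in>{0..1}. \<forall>s. R \<le> \<bar>s\<bar> \<longrightarrow>
      norm (H t s - diag_line s) < e \<and> norm (vector_derivative (H t) (at s) - (1, 0, 1)) < e"
  proof (intro allI impI)
    fix e :: real assume e: "e > 0"
    define P where "P s \<longleftrightarrow> s \<notin> C \<and> norm (K0 s - diag_line s - 0) < e \<and> norm (K1 s - diag_line s - 0) < e
        \<and> norm (V0 s - (1, 0, 1)) < e \<and> norm (V1 s - (1, 0, 1)) < e" for s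
    have "eventually P at_top" unfolding P_def
      using ev_notC(1) tendsto_ev_norm[OF lims(1) e] tendsto_ev_norm[OF lims(5) e]
        tendsto_ev_norm[OF lims(3) e] tendsto_ev_norm[OF lims(7) e]
      by (intro eventually_conj; simp)
    moreover have "eventually P at_bot" unfolding P_def
      using ev_notC(2) tendsto_ev_norm[OF lims(2) e] tendsto_ev_norm[OF lims(6) e]
        tendsto_ev_norm[OF lims(4) e] tendsto_ev_norm[OF lims(8) e]
      by (intro eventually_conj; simp)
    ultimately obtain R where R: "\<forall>s. R \<le> \<bar>s\<bar> \<longrightarrow> P s" using ev_abs by blast
    show "\<exists>R. \<forall>t\<in>{0..1}. \<forall>s. R \<le> \<bar>s\<bar> \<longrightarrow>
      norm (H t s - diag_line s) < e \<and> norm (vector_derivative (H t) (at s) - (1, 0, 1)) < e"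
    proof (intro exI ballI allI impI)
      fix t s :: real assume t: "t \<in> {0..1}" and s: "R \<le> \<bar>s\<bar>"
      then have p: "P s" using R by blast
      show "norm (H t s - diag_line s) < e \<and> norm (vector_derivative (H t) (at s) - (1, 0, 1)) < e"
        unfolding vd_H using p t unfolding P_def
        by (auto simp: H_diag Ds_diag intro!: convex_norm_less)
    qed
  qed
qed

end


lemma smono_surj_cont:
  fixes g :: "real \<Rightarrow> real"
  assumes sm: "strict_mono g" and su: "surj g"
  shows "isCont g y0"
  unfolding continuous_at_eps_delta
proof (intro allI impI)
  fix e :: real assume e: "e > 0"
  obtain y1 where y1: "g y1 = g y0 - e" using su by (metis surjD)
  obtain y2 where y2: "g y2 = g y0 + e" using su by (metis surjD)
  have "y1 < y0"
  proof (rule ccontr)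
    assume "\<not> y1 < y0" then have "g y0 \<le> g y1" using strict_mono_less_eq[OF sm] by simp
    then show False using y1 e by simp
  qed
  have "y0 < y2"
  proof (rule ccontr)
    assume "\<not> y0 < y2" then have "g y2 \<le> g y0" using strict_mono_less_eq[OF sm] by simp
    then show False using y2 e by simp
  qed
  show "\<exists>d>0. \<forall>x'. dist x' y0 < d \<longrightarrow> dist (g x') (g y0) < e"
  proof (intro exI[of _ "min (y0 - y1) (y2 - y0)"] conjI allI impI)
    show "min (y0 - y1) (y2 - y0) > 0" using \<open>y1 < y0\<close> \<open>y0 < y2\<close> by simp
    fix x' assume "dist x' y0 < min (y0 - y1) (y2 - y0)"
    then have "y1 < x'" "x' < y2" by (auto simp: dist_real_def)
    then have "g y1 < g x'" "g x' < g y2" using sm strict_mono_less by blast+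
    then show "dist (g x') (g y0) < e" using y1 y2 by (auto simp: dist_real_def)
  qed
qed

lemma am_parts:
  assumes "almost_monotone_on K U"
  shows am_int: "\<And>p. p \<in> chord_ends K \<Longrightarrow> \<exists>l r. l < p \<and> p < r \<and> U p = {l<..<r}"
    and am_out: "\<And>s. s \<notin> (\<Union>p \<in> chord_ends K. U p) \<Longrightarrow> pz (K s) = s \<and> py (K s) > 0"
    and am_lo: "\<And>a b s. (a, b) \<in> double_points K \<Longrightarrow> s \<in> U a \<Longrightarrow> pz (K s) = s"
    and am_up: "\<And>a b. (a, b) \<in> double_points K \<Longrightarrow> dive K b (U b)"
    and am_disj: "\<And>p q. p \<in> chord_ends K \<Longrightarrow> q \<in> chord_ends K \<Longrightarrow> p \<noteq> q \<Longrightarrow> U p \<inter> U q = {}"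
proof -
  have A: "\<forall>p \<in> chord_ends K. \<exists>l r. l < p \<and> p < r \<and> U p = {l<..<r}"
     and B: "\<forall>p \<in> chord_ends K. \<forall>q \<in> chord_ends K. p \<noteq> q \<longrightarrow> U p \<inter> U q = {}"
     and C: "\<forall>s. s \<notin> (\<Union>p \<in> chord_ends K. U p) \<longrightarrow> pz (K s) = s \<and> py (K s) > 0"
     and D: "\<forall>(a, b) \<in> double_points K. (\<forall>s \<in> U a. pz (K s) = s) \<and> dive K b (U b)"
    using assms unfolding almost_monotone_on_def by auto
  show "\<And>p. p \<in> chord_ends K \<Longrightarrow> \<exists>l r. l < p \<and> p < r \<and> U p = {l<..<r}" using A by blast
  show "\<And>s. s \<notin> (\<Union>p \<in> chord_ends K. U p) \<Longrightarrow> pz (K s) = s \<and> py (K s) > 0" using C by blast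
  show "\<And>a b s. (a, b) \<in> double_points K \<Longrightarrow> s \<in> U a \<Longrightarrow> pz (K s) = s" using D by auto
  show "\<And>a b. (a, b) \<in> double_points K \<Longrightarrow> dive K b (U b)" using D by auto
  show "\<And>p q. p \<in> chord_ends K \<Longrightarrow> q \<in> chord_ends K \<Longrightarrow> p \<noteq> q \<Longrightarrow> U p \<inter> U q = {}" using B by blast
qed

lemma am_ypos:
  assumes am: "almost_monotone_on K U" and fe: "fully_exposed K" and y: "py (K u) > 0"
  shows "pz (K u) = u"
proof (cases "u \<in> (\<Union>p \<in> chord_ends K. U p)")
  case False then show ?thesis using am_out[OF am] by blast
next
  case True
  then obtain p where p: "p \<in> chord_ends K" "u \<in> U p" by blast
  then consider (lo) b where "(p, b) \<in> double_points K" | (up) a where "(a, p) \<in> double_points K"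
    unfolding chord_ends_def by force
  then show ?thesis
  proof cases
    case lo then show ?thesis using am_lo[OF am] p by blast
  next
    case up
    then have "dive K p (U p)" using am_up[OF am] by blast
    then obtain c d where cd: "{c..d} \<subseteq> U p" "\<forall>s \<in> U p - {c..d}. pz (K s) = s"
      "\<forall>s \<in> {c..d}. (py (K s) \<le> 0 \<longleftrightarrow> py (K p) \<le> 0)" unfolding dive_def by blast
    have "py (K a) \<le> 0" using fe up unfolding fully_exposed_def by fast
    moreover have "K a = K p" using up by (simp add: double_points_def)
    ultimately have "py (K p) \<le> 0" by simp
    then have "u \<notin> {c..d}" using cd(3) y by force
    then show ?thesis using cd(2) p by blast
  qed
qed

lemma am_D:
  assumes am: "almost_monotone_on K U" and fin: "finite (double_points K)"
  shows "\<exists>D. closed D \<and> D \<subseteq> (\<Union>p \<in> chord_ends K. U p) \<and> (\<forall>u. u \<notin> D \<longrightarrow> pz (K u) = u)"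
proof -
  have "\<forall>x \<in> double_points K. \<exists>cd. {fst cd..snd cd} \<subseteq> U (snd x) \<and> (\<forall>s \<in> U (snd x) - {fst cd..snd cd}. pz (K s) = s)"
  proof
    fix x assume x: "x \<in> double_points K"
    then have "dive K (snd x) (U (snd x))" using am_up[OF am] by (cases x) auto
    then obtain c d where "{c..d} \<subseteq> U (snd x)" "\<forall>s \<in> U (snd x) - {c..d}. pz (K s) = s"
      unfolding dive_def by blast
    then show "\<exists>cd. {fst cd..snd cd} \<subseteq> U (snd x) \<and> (\<forall>s \<in> U (snd x) - {fst cd..snd cd}. pz (K s) = s)"
      by (intro exI[of _ "(c, d)"]) simp
  qed
  then obtain f where f: "\<forall>x \<in> double_points K. {fst (f x)..snd (f x)} \<subseteq> U (snd x)
     \<and> (\<forall>s \<in> U (snd x) - {fst (f x)..snd (f x)}. pz (K s) = s)" by (rule bchoice[THEN exE]) blast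
  define D where "D = (\<Union>x \<in> double_points K. {fst (f x)..snd (f x)})"
  have "closed D" unfolding D_def using fin by (intro closed_UN) auto
  moreover have "D \<subseteq> (\<Union>p \<in> chord_ends K. U p)"
    unfolding D_def chord_ends_def using f by fastforce
  moreover have "pz (K u) = u" if u: "u \<notin> D" for u
  proof (cases "u \<in> (\<Union>p \<in> chord_ends K. U p)")
    case False then show ?thesis using am_out[OF am] by blast
  next
    case True
    then obtain p where p: "p \<in> chord_ends K" "u \<in> U p" by blast
    then consider (lo) b where "(p, b) \<in> double_points K" | (up) a where "(a, p) \<in> double_points K"
      unfolding chord_ends_def by force
    then show ?thesis
    proof cases
      case lo then show ?thesis using am_lo[OF am] p by blast
    next
      case up
      then have "u \<notin> {fst (f (a, p))..snd (f (a, p))}" using u unfolding D_def by blast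
      then show ?thesis using f up p by fastforce
    qed
  qed
  ultimately show ?thesis by blast
qed



lemma conv_between:
  fixes l r s u t :: real
  assumes "l < s" "s < r" "l < u" "u < r" "0 \<le> t" "t \<le> 1"
  shows "(1 - t) * s + t * u \<in> {l<..<r}"
proof -
  have "(1 - t) * s \<ge> (1 - t) * min s u" "t * u \<ge> t * min s u"
    using assms by (intro mult_left_mono; simp)+
  then have a: "(1 - t) * s + t * u \<ge> min s u" by (simp add: algebra_simps)
  have "(1 - t) * s \<le> (1 - t) * max s u" "t * u \<le> t * max s u"
    using assms by (intro mult_left_mono; simp)+
  then have b: "(1 - t) * s + t * u \<le> max s u" by (simp add: algebra_simps)
  show ?thesis using a b assms by auto
qed

theorem mainTheorem7:
  fixes k :: nat and K0 K1 :: "real \<Rightarrow> pt"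
  assumes "k_singular k K0" and "k_singular k K1"
    and "almost_monotone K0" and "almost_monotone K1"
    and "fully_exposed K0" and "fully_exposed K1"
    and "\<exists>\<phi> U. strict_mono \<phi> \<and> surj \<phi>
           \<and> double_points K1 = (\<lambda>(a, b). (\<phi> a, \<phi> b)) ` double_points K0
           \<and> almost_monotone_on K0 U
           \<and> almost_monotone_on K1 (\<lambda>q. \<phi> ` U (inv \<phi> q))
           \<and> (\<forall>p \<in> chord_ends K0. \<forall>s \<in> U p. K1 (\<phi> s) = K0 s)"
  shows "singular_isotopic k K0 K1"
proof -
  obtain \<phi> U where sm: "strict_mono \<phi>" and su: "surj \<phi>"
    and dp1: "double_points K1 = (\<lambda>(a, b). (\<phi> a, \<phi> b)) ` double_points K0"
    and am0: "almost_monotone_on K0 U"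
    and am1: "almost_monotone_on K1 (\<lambda>q. \<phi> ` U (inv \<phi> q))"
    and agree: "\<forall>p \<in> chord_ends K0. \<forall>s \<in> U p. K1 (\<phi> s) = K0 s"
    using assms(7) by blast
  define U1 where "U1 = (\<lambda>q. \<phi> ` U (inv \<phi> q))"
  have am1': "almost_monotone_on K1 U1" using am1 unfolding U1_def .
  have inj: "inj \<phi>" using sm strict_mono_imp_inj_on by blast
  have ivf: "\<And>x. inv \<phi> (\<phi> x) = x" using inv_f_f[OF inj] .
  have fiv: "\<And>y. \<phi> (inv \<phi> y) = y" using surj_f_inv_f[OF su] .
  have U1\<phi>: "\<And>p. U1 (\<phi> p) = \<phi> ` U p" by (simp add: U1_def ivf)
  have lt: "\<And>x y. \<phi> x < \<phi> y \<longleftrightarrow> x < y" using strict_mono_less[OF sm] .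
  have le: "\<And>x y. \<phi> x \<le> \<phi> y \<longleftrightarrow> x \<le> y" using strict_mono_less_eq[OF sm] .
  have dp1m: "\<And>a b. (a, b) \<in> double_points K0 \<Longrightarrow> (\<phi> a, \<phi> b) \<in> double_points K1"
    unfolding dp1 by force
  have E1: "chord_ends K1 = \<phi> ` chord_ends K0"
    unfolding chord_ends_def dp1 image_Un image_image by (auto simp: case_prod_beta)
  have E0ab: "\<And>a b. (a, b) \<in> double_points K0 \<Longrightarrow> a \<in> chord_ends K0 \<and> b \<in> chord_ends K0"
    unfolding chord_ends_def by force
  have fin0: "finite (double_points K0)" using assms(1) unfolding k_singular_def by blast
  have fin1: "finite (double_points K1)" using assms(2) unfolding k_singular_def by blast

  have lowfix: "\<phi> s = s" if ab: "(a, b) \<in> double_points K0" and s: "s \<in> U a" for a b s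
  proof -
    have "pz (K0 s) = s" using am_lo[OF am0 ab s] .
    moreover have "\<phi> s \<in> U1 (\<phi> a)" using s U1\<phi> by auto
    then have "pz (K1 (\<phi> s)) = \<phi> s" using am_lo[OF am1' dp1m[OF ab]] by blast
    moreover have "K1 (\<phi> s) = K0 s" using agree E0ab[OF ab] s by blast
    ultimately show ?thesis by simp
  qed

  have upfix: "\<exists>\<alpha> \<beta>. \<alpha> < \<beta> \<and> \<alpha> \<in> U b \<and> \<beta> \<in> U b \<and> (\<forall>s \<in> U b. s < \<alpha> \<or> \<beta> < s \<longrightarrow> \<phi> s = s)"
    if ab: "(a, b) \<in> double_points K0" for a b
  proof -
    obtain c d where cd: "c < b" "b < d" "{c..d} \<subseteq> U b" "\<forall>s \<in> U b - {c..d}. pz (K0 s) = s"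
      using am_up[OF am0 ab] unfolding dive_def by blast
    obtain c' d' where cd': "c' < \<phi> b" "\<phi> b < d'" "{c'..d'} \<subseteq> U1 (\<phi> b)"
      "\<forall>s \<in> U1 (\<phi> b) - {c'..d'}. pz (K1 s) = s"
      using am_up[OF am1' dp1m[OF ab]] unfolding dive_def by blast
    have "c' \<in> \<phi> ` U b" "d' \<in> \<phi> ` U b" using cd' U1\<phi> by auto
    then obtain u1 u2 where u: "u1 \<in> U b" "c' = \<phi> u1" "u2 \<in> U b" "d' = \<phi> u2" by blast
    have "u1 < u2" using u cd'(1,2) lt by (metis order.strict_trans)
    define \<alpha> where "\<alpha> = min c u1"
    define \<beta> where "\<beta> = max d u2"
    have cdU: "c \<in> U b" "d \<in> U b" using cd by auto
    show ?thesis
    proof (intro exI conjI ballI impI)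
      show "\<alpha> < \<beta>" unfolding \<alpha>_def \<beta>_def using cd(1,2) by auto
      show "\<alpha> \<in> U b" unfolding \<alpha>_def using cdU u by (auto simp: min_def)
      show "\<beta> \<in> U b" unfolding \<beta>_def using cdU u by (auto simp: max_def)
      fix s assume s: "s \<in> U b" and so: "s < \<alpha> \<or> \<beta> < s"
      have "s \<notin> {c..d}" using so unfolding \<alpha>_def \<beta>_def by auto
      then have z0: "pz (K0 s) = s" using cd(4) s by blast
      have "\<phi> s < c' \<or> d' < \<phi> s" using so u lt unfolding \<alpha>_def \<beta>_def by auto
      then have "\<phi> s \<notin> {c'..d'}" by auto
      moreover have "\<phi> s \<in> U1 (\<phi> b)" using s U1\<phi> by auto
      ultimately have z1: "pz (K1 (\<phi> s)) = \<phi> s" using cd'(4) by blast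
      have "K1 (\<phi> s) = K0 s" using agree E0ab[OF ab] s by blast
      then show "\<phi> s = s" using z0 z1 by simp
    qed
  qed
  have "\<forall>x \<in> double_points K0. \<exists>ab. fst ab < snd ab \<and> fst ab \<in> U (snd x) \<and> snd ab \<in> U (snd x)
      \<and> (\<forall>s \<in> U (snd x). s < fst ab \<or> snd ab < s \<longrightarrow> \<phi> s = s)"
  proof
    fix x assume x: "x \<in> double_points K0"
    obtain \<alpha> \<beta> where "\<alpha> < \<beta> \<and> \<alpha> \<in> U (snd x) \<and> \<beta> \<in> U (snd x) \<and> (\<forall>s \<in> U (snd x). s < \<alpha> \<or> \<beta> < s \<longrightarrow> \<phi> s = s)"
      using upfix[of "fst x" "snd x"] x by auto
    then show "\<exists>ab. fst ab < snd ab \<and> fst ab \<in> U (snd x) \<and> snd ab \<in> U (snd x)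
      \<and> (\<forall>s \<in> U (snd x). s < fst ab \<or> snd ab < s \<longrightarrow> \<phi> s = s)"
      by (intro exI[of _ "(\<alpha>, \<beta>)"]) simp
  qed
  then obtain AB where AB: "\<forall>x \<in> double_points K0. fst (AB x) < snd (AB x) \<and> fst (AB x) \<in> U (snd x)
      \<and> snd (AB x) \<in> U (snd x) \<and> (\<forall>s \<in> U (snd x). s < fst (AB x) \<or> snd (AB x) < s \<longrightarrow> \<phi> s = s)"
    by (rule bchoice[THEN exE]) blast

  have U1int: "\<exists>l r. \<phi> ` U p = {l<..<r}" if p: "p \<in> chord_ends K0" for p
    using am_int[OF am1', of "\<phi> p"] p E1 U1\<phi> by auto

  have sub: "U p \<subseteq> \<phi> ` U p" if p: "p \<in> chord_ends K0" for p
  proof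
    fix s assume s: "s \<in> U p"
    from p consider (lo) b where "(p, b) \<in> double_points K0" | (up) a where "(a, p) \<in> double_points K0"
      unfolding chord_ends_def by force
    then show "s \<in> \<phi> ` U p"
    proof cases
      case lo then have "\<phi> s = s" using lowfix s by blast
      then show ?thesis using s by (metis imageI)
    next
      case up
      define x where "x = (a, p)"
      have x: "x \<in> double_points K0" "snd x = p" using up x_def by auto
      have ABx: "fst (AB x) < snd (AB x)" "fst (AB x) \<in> U p" "snd (AB x) \<in> U p"
        "\<forall>s \<in> U p. s < fst (AB x) \<or> snd (AB x) < s \<longrightarrow> \<phi> s = s"
        using AB x by auto
      show ?thesis
      proof (cases "s < fst (AB x) \<or> snd (AB x) < s")
        case True then have "\<phi> s = s" using ABx(4) s by blast
        then show ?thesis using s by (metis imageI)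
      next
        case False
        obtain l r where lr: "U p = {l<..<r}" using am_int[OF am0 p] by blast
        obtain l' r' where lr': "\<phi> ` U p = {l'<..<r'}" using U1int[OF p] by blast
        define s1 where "s1 = (l + fst (AB x)) / 2"
        define s2 where "s2 = (snd (AB x) + r) / 2"
        have s1: "s1 \<in> U p" "s1 < fst (AB x)" using ABx(2) lr unfolding s1_def by auto
        have s2: "s2 \<in> U p" "snd (AB x) < s2" using ABx(3) lr unfolding s2_def by auto
        have "\<phi> s1 = s1" "\<phi> s2 = s2" using ABx(4) s1 s2 by auto
        then have "s1 \<in> {l'<..<r'}" "s2 \<in> {l'<..<r'}" using s1 s2 lr' by (metis imageI)+
        moreover have "s1 < s" "s < s2" using s1 s2 False by auto
        ultimately show ?thesis using lr' by auto
      qed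
    qed
  qed

  define N where "N = (\<Union>p \<in> chord_ends K0. \<phi> ` U p)"
  have N1: "(\<Union>q \<in> chord_ends K1. U1 q) = N" unfolding N_def E1 by (simp add: U1\<phi>)
  have N0: "(\<Union>p \<in> chord_ends K0. U p) \<subseteq> N" unfolding N_def using sub by blast
  define C where "C = (\<Union>x \<in> double_points K0. {\<phi> (fst (AB x))..\<phi> (snd (AB x))})"
  define ch where "ch s = (if s \<in> C then inv \<phi> s else s)" for s

  have chN: "ch s = inv \<phi> s" if s: "s \<in> N" for s
  proof (cases "s \<in> C")
    case True then show ?thesis by (simp add: ch_def)
  next
    case False
    obtain p u where pu: "p \<in> chord_ends K0" "u \<in> U p" "s = \<phi> u" using s unfolding N_def by blast
    have "\<phi> u = u"
    proof -
      from pu(1) consider (lo) b where "(p, b) \<in> double_points K0" | (up) a where "(a, p) \<in> double_points K0"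
        unfolding chord_ends_def by force
      then show ?thesis
      proof cases
        case lo then show ?thesis using lowfix pu by blast
      next
        case up
        define x where "x = (a, p)"
        have x: "x \<in> double_points K0" "snd x = p" using up x_def by auto
        have ABx: "\<forall>s \<in> U p. s < fst (AB x) \<or> snd (AB x) < s \<longrightarrow> \<phi> s = s"
          using AB x by auto
        show ?thesis
        proof (cases "u < fst (AB x) \<or> snd (AB x) < u")
          case True then show ?thesis using ABx pu by blast
        next
          case F: False
          then have "s \<in> {\<phi> (fst (AB x))..\<phi> (snd (AB x))}" using pu(3) le by auto
          then have "s \<in> C" using x unfolding C_def by blast
          then show ?thesis using False by blast
        qed
      qed
    qed
    then have "inv \<phi> s = s" using pu(3) ivf[of u] by simp
    then show ?thesis using False by (simp add: ch_def)
  qed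

  obtain D0 where D0: "closed D0" "D0 \<subseteq> (\<Union>p \<in> chord_ends K0. U p)" "\<forall>u. u \<notin> D0 \<longrightarrow> pz (K0 u) = u"
    using am_D[OF am0 fin0] by blast
  obtain D1 where D1: "closed D1" "D1 \<subseteq> (\<Union>q \<in> chord_ends K1. U1 q)" "\<forall>u. u \<notin> D1 \<longrightarrow> pz (K1 u) = u"
    using am_D[OF am1' fin1] by blast

  have ism: "strict_mono (inv \<phi>)"
  proof (rule strict_monoI)
    fix x y :: real assume "x < y"
    show "inv \<phi> x < inv \<phi> y"
    proof (rule ccontr)
      assume "\<not> inv \<phi> x < inv \<phi> y"
      then have "\<phi> (inv \<phi> y) \<le> \<phi> (inv \<phi> x)" using le by simp
      then show False using \<open>x < y\<close> fiv by simp
    qed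
  qed
  have isu: "surj (inv \<phi>)" by (metis ivf surjI)
  have ic: "isCont (inv \<phi>) s" for s by (rule smono_surj_cont[OF ism isu])

  have openN: "open N" unfolding N_def
    using U1int by (intro open_UN) (metis open_greaterThanLessThan)
  have CN: "C \<subseteq> N"
  proof
    fix s assume "s \<in> C"
    then obtain x where x: "x \<in> double_points K0" "s \<in> {\<phi> (fst (AB x))..\<phi> (snd (AB x))}"
      unfolding C_def by blast
    have p: "snd x \<in> chord_ends K0" using E0ab x(1) by (cases x) auto
    obtain l' r' where lr': "\<phi> ` U (snd x) = {l'<..<r'}" using U1int[OF p] by blast
    have "\<phi> (fst (AB x)) \<in> {l'<..<r'}" "\<phi> (snd (AB x)) \<in> {l'<..<r'}"
      using AB x(1) lr' by (metis imageI)+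
    then have "s \<in> \<phi> ` U (snd x)" using x(2) lr' by auto
    then show "s \<in> N" using p unfolding N_def by blast
  qed
  have closedC: "closed C" unfolding C_def using fin0 by (intro closed_UN) auto
  have boundedC: "bounded C" unfolding C_def using fin0 by (intro bounded_UN) auto

  interpret isot k K0 K1 ch N C "D0 \<union> D1"
  proof
    show "k_singular k K0" by (rule assms(1))
    show "long_knot K1" using assms(2) unfolding k_singular_def by blast
    show "open N" by (rule openN)
    show "closed C" by (rule closedC)
    show "bounded C" by (rule boundedC)
    show "C \<subseteq> N" by (rule CN)
    show "continuous_on UNIV ch"
    proof (rule continuous_at_imp_continuous_on, intro ballI)
      fix s :: real
      show "isCont ch s"
      proof (cases "s \<in> N")
        case True
        have ev: "eventually (\<lambda>x. ch x = inv \<phi> x) (nhds s)"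
          unfolding eventually_nhds using openN True chN by blast
        show ?thesis using isCont_cong[OF ev] ic[of s] by simp
      next
        case False
        then have "s \<notin> C" using CN by auto
        have "eventually (\<lambda>x. ch x = x) (nhds s)"
          unfolding eventually_nhds using closedC \<open>s \<notin> C\<close>
          by (intro exI[of _ "-C"]) (auto simp: ch_def)
        then show ?thesis using isCont_cong[of ch "\<lambda>x. x" s] by simp
      qed
    qed
    show "\<forall>s. s \<notin> C \<longrightarrow> ch s = s" by (simp add: ch_def)
    show "inj_on ch N"
    proof (rule inj_onI)
      fix x y assume "x \<in> N" "y \<in> N" "ch x = ch y"
      then have "inv \<phi> x = inv \<phi> y" using chN by simp
      then show "x = y" using fiv by metis
    qed
    show "\<forall>s\<in>N. K1 s = K0 (ch s)"
    proof
      fix s assume s: "s \<in> N"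
      obtain p u where pu: "p \<in> chord_ends K0" "u \<in> U p" "s = \<phi> u" using s unfolding N_def by blast
      show "K1 s = K0 (ch s)" using chN[OF s] pu agree ivf by simp
    qed
    show "\<forall>s\<in>N. \<forall>t\<in>{0..1}. (1 - t) * s + t * ch s \<in> N"
    proof (intro ballI)
      fix s t assume s: "s \<in> N" and t: "t \<in> {0..1::real}"
      obtain p u where pu: "p \<in> chord_ends K0" "u \<in> U p" "s = \<phi> u" using s unfolding N_def by blast
      obtain l' r' where lr': "\<phi> ` U p = {l'<..<r'}" using U1int[OF pu(1)] by blast
      have chs: "ch s = u" using chN[OF s] pu ivf by simp
      have "u \<in> {l'<..<r'}" using sub[OF pu(1)] pu(2) lr' by blast
      moreover have "s \<in> {l'<..<r'}" using pu lr' by blast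
      ultimately have "(1 - t) * s + t * ch s \<in> {l'<..<r'}"
        unfolding chs using t by (intro conv_between) auto
      then show "(1 - t) * s + t * ch s \<in> N" using lr' pu(1) unfolding N_def by blast
    qed
    show "\<forall>s. s \<notin> N \<longrightarrow> pz (K0 s) = s \<and> py (K0 s) > 0 \<and> pz (K1 s) = s \<and> py (K1 s) > 0"
    proof (intro allI impI)
      fix s assume "s \<notin> N"
      then have "s \<notin> (\<Union>p \<in> chord_ends K0. U p)" "s \<notin> (\<Union>q \<in> chord_ends K1. U1 q)"
        using N0 N1 by auto
      then show "pz (K0 s) = s \<and> py (K0 s) > 0 \<and> pz (K1 s) = s \<and> py (K1 s) > 0"
        using am_out[OF am0, of s] am_out[OF am1', of s] by simp
    qed
    show "\<forall>u. py (K0 u) > 0 \<longrightarrow> pz (K0 u) = u" by (intro allI impI) (rule am_ypos[OF am0 assms(5)])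
    show "closed (D0 \<union> D1)" by (rule closed_Un[OF D0(1) D1(1)])
    have "D0 \<subseteq> N" using D0(2) N0 by (rule subset_trans)
    moreover have "D1 \<subseteq> N" using D1(2) N1 by simp
    ultimately show "D0 \<union> D1 \<subseteq> N" by (rule Un_least)
    show "\<forall>u. u \<notin> D0 \<union> D1 \<longrightarrow> pz (K0 u) = u \<and> pz (K1 u) = u" using D0(3) D1(3) by simp
    show "chord_ends K0 \<subseteq> N"
    proof
      fix p assume p: "p \<in> chord_ends K0"
      obtain l r where "l < p" "p < r" "U p = {l<..<r}" using am_int[OF am0 p] by blast
      then have "p \<in> U p" by auto
      then show "p \<in> N" using sub[OF p] p unfolding N_def by blast
    qed
  qed
  show ?thesis by (rule isotopic)
qed


end
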